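(* Let $d\ge2$ and let $\mathcal T_d=(t_{i-j})_{0\le i,j\le d-1}$ be a complex Toeplitz matrix which is invertible, and assume that $\mathcal T_{d-1}=(t_{i-j})_{0\le i,j\le d-2}$ is singular. For $\gamma,\delta\in\mathbb C$ let $$\mathcal T_{d+1}=\begin{pmatrix}\mathcal T_d & (\gamma,t_{-d+1},\dots,t_{-1})^T\\ (\delta,t_{d-1},\dots,t_1)& t_0\end{pmatrix}.$$ Let $\mathbf V_-=(0,t_{-d+1},\dots,t_{-1})^T$, $\mathbf V_+=(0,t_{d-1},\dots,t_1)^T$ and $\mathbf e_0=(1,0,\dots,0)^T$ in $\mathbb C^d$. Then $$\det(\mathcal T_{d+1})=-\det(\mathcal T_d)\big(\gamma\,\mathbf V_+^T\mathcal T_d^{-1}\mathbf e_0+\delta\,\mathbf e_0^T\mathcal T_d^{-1}\mathbf V_-+\mathbf V_+^T\mathcal T_d^{-1}\mathbf V_--t_0\big),$$ and neither $\mathbf V_+^T\mathcal T_d^{-1}\mathbf e_0$ nor $\mathbf e_0^T\mathcal T_d^{-1}\mathbf V_-$ is zero. *)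

theory Defs
  imports "Jordan_Normal_Form.Determinant" "Jordan_Normal_Form.Matrix"
begin

definition toeplitz :: "nat \<Rightarrow> (int \<Rightarrow> 'a) \<Rightarrow> 'a mat" where
  "toeplitz n t = mat n n (\<lambda>(i,j). t (int i - int j))"

definition bordered_toeplitz :: "nat \<Rightarrow> (int \<Rightarrow> 'a) \<Rightarrow> 'a \<Rightarrow> 'a \<Rightarrow> 'a mat" where
  "bordered_toeplitz d t \<gamma> \<delta> = mat (d+1) (d+1) (\<lambda>(i,j).
     if i = 0 \<and> j = d then \<gamma> else if i = d \<and> j = 0 then \<delta> else t (int i - int j))"

definition V_minus :: "nat \<Rightarrow> (int \<Rightarrow> 'a::zero) \<Rightarrow> 'a vec" where
  "V_minus d t = vec d (\<lambda>i. if i = 0 then 0 else t (int i - int d))"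

definition V_plus :: "nat \<Rightarrow> (int \<Rightarrow> 'a::zero) \<Rightarrow> 'a vec" where
  "V_plus d t = vec d (\<lambda>i. if i = 0 then 0 else t (int d - int i))"

end

theory Submission
  imports Defs
begin

lemma inj_rows:
  fixes A B :: "nat \<Rightarrow> nat \<Rightarrow> complex" and y :: "nat \<Rightarrow> complex"
  assumes BA: "\<And>i j. i < n \<Longrightarrow> j < n \<Longrightarrow> (\<Sum>k<n. B i k * A k j) = (if i = j then 1 else 0)"
    and h: "\<And>i. i < n \<Longrightarrow> (\<Sum>j<n. A i j * y j) = 0"
    and l: "l < n"
  shows "y l = 0"
proof -
  have "0 = (\<Sum>i<n. B l i * (\<Sum>j<n. A i j * y j))" using h by simp
  also have "\<dots> = (\<Sum>i<n. \<Sum>j<n. B l i * (A i j * y j))"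
    by (simp add: sum_distrib_left)
  also have "\<dots> = (\<Sum>j<n. \<Sum>i<n. B l i * (A i j * y j))"
    by (rule sum.swap)
  also have "\<dots> = (\<Sum>j<n. (\<Sum>i<n. B l i * A i j) * y j)"
    by (simp add: sum_distrib_right mult.assoc)
  also have "\<dots> = (\<Sum>j<n. (if l = j then y j else 0))"
    by (rule sum.cong, simp, simp add: BA l)
  also have "\<dots> = y l" using l by simp
  finally show ?thesis by simp
qed

lemma inj_cols:
  fixes A B :: "nat \<Rightarrow> nat \<Rightarrow> complex" and y :: "nat \<Rightarrow> complex"
  assumes AB: "\<And>i j. i < n \<Longrightarrow> j < n \<Longrightarrow> (\<Sum>k<n. A i k * B k j) = (if i = j then 1 else 0)"
    and h: "\<And>j. j < n \<Longrightarrow> (\<Sum>i<n. y i * A i j) = 0"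
    and l: "l < n"
  shows "y l = 0"
proof (rule inj_rows[where A="\<lambda>i j. A j i" and B="\<lambda>i j. B j i", OF _ _ l])
  fix i j assume "i < n" "j < n"
  then show "(\<Sum>k<n. B k i * A j k) = (if i = j then 1 else 0)"
    using AB[of j i] by (simp add: mult.commute)
next
  fix i assume "i < n"
  then show "(\<Sum>j<n. A j i * y j) = 0" using h[of i] by (simp add: mult.commute)
qed

theorem proposition14:
  fixes d :: nat and t :: "int \<Rightarrow> complex" and \<gamma> \<delta> :: complex
    and Tinv :: "complex mat"
  assumes "d \<ge> 2"
    and "invertible_mat (toeplitz d t)"
    and "det (toeplitz (d - 1) t) = 0"
    and "Tinv \<in> carrier_mat d d"
    and "inverts_mat (toeplitz d t) Tinv" and "inverts_mat Tinv (toeplitz d t)"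
  shows "(det (bordered_toeplitz d t \<gamma> \<delta>) =
           - det (toeplitz d t) *
             (\<gamma> * (V_plus d t \<bullet> (Tinv *\<^sub>v unit_vec d 0))
              + \<delta> * (unit_vec d 0 \<bullet> (Tinv *\<^sub>v V_minus d t))
              + V_plus d t \<bullet> (Tinv *\<^sub>v V_minus d t)
              - t 0))
    \<and> (V_plus d t \<bullet> (Tinv *\<^sub>v unit_vec d 0) \<noteq> 0)
    \<and> (unit_vec d 0 \<bullet> (Tinv *\<^sub>v V_minus d t) \<noteq> 0)"
proof -
  define T where "T = toeplitz d t"
  have d0: "0 < d" using assms(1) by simp
  have Tc: "T \<in> carrier_mat d d" by (simp add: T_def toeplitz_def)
  have Tic: "Tinv \<in> carrier_mat d d" by (rule assms(4))
  have Tij: "\<And>i j. i < d \<Longrightarrow> j < d \<Longrightarrow> T $$ (i,j) = t (int i - int j)"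
    by (simp add: T_def toeplitz_def)
  have TTi: "T * Tinv = 1\<^sub>m d" using assms(5) Tc unfolding inverts_mat_def T_def[symmetric] by simp
  have TiT: "Tinv * T = 1\<^sub>m d" using assms(6) Tic unfolding inverts_mat_def T_def[symmetric] by simp
  have prodT: "\<And>A B i j. A \<in> carrier_mat d d \<Longrightarrow> B \<in> carrier_mat d d \<Longrightarrow> i < d \<Longrightarrow> j < d \<Longrightarrow>
      (A * B) $$ (i,j) = (\<Sum>k<d. A $$ (i,k) * B $$ (k,j))"
    by (auto simp: scalar_prod_def atLeast0LessThan intro!: sum.cong)
  have AB: "\<And>i j. i < d \<Longrightarrow> j < d \<Longrightarrow> (\<Sum>k<d. t (int i - int k) * Tinv $$ (k,j)) = (if i = j then 1 else 0)"
  proof -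
    fix i j assume ij: "i < d" "j < d"
    have "(T * Tinv) $$ (i,j) = (if i = j then 1 else 0)" using TTi ij by simp
    then show "(\<Sum>k<d. t (int i - int k) * Tinv $$ (k,j)) = (if i = j then 1 else 0)"
      using prodT[OF Tc Tic ij] ij by (simp add: Tij)
  qed
  have BA: "\<And>i j. i < d \<Longrightarrow> j < d \<Longrightarrow> (\<Sum>k<d. Tinv $$ (i,k) * t (int k - int j)) = (if i = j then 1 else 0)"
  proof -
    fix i j assume ij: "i < d" "j < d"
    have "(Tinv * T) $$ (i,j) = (if i = j then 1 else 0)" using TiT ij by simp
    then show "(\<Sum>k<d. Tinv $$ (i,k) * t (int k - int j)) = (if i = j then 1 else 0)"
      using prodT[OF Tic Tc ij] ij by (simp add: Tij)
  qed
  have detT: "det T \<noteq> 0"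
  proof
    assume "det T = 0"
    have "det (Tinv * T) = det Tinv * det T" by (rule det_mult[OF Tic Tc])
    then show False using TiT \<open>det T = 0\<close> by simp
  qed
  have Ti00: "Tinv $$ (0,0) = 0"
  proof -
    have del: "mat_delete T 0 0 = toeplitz (d - 1) t"
    proof (rule eq_matI)
      fix i j assume "i < dim_row (toeplitz (d - 1) t)" "j < dim_col (toeplitz (d - 1) t)"
      then have ij: "Suc i < d" "Suc j < d" by (auto simp: toeplitz_def)
      have "mat_delete T 0 0 $$ (i,j) = T $$ (Suc i, Suc j)"
        using ij Tc by (simp add: mat_delete_def)
      also have "\<dots> = t (int i - int j)" using ij by (simp add: Tij)
      finally show "mat_delete T 0 0 $$ (i,j) = toeplitz (d - 1) t $$ (i,j)"
        using ij by (simp add: toeplitz_def)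
    qed (insert Tc, auto simp: toeplitz_def)
    have adjc: "adj_mat T \<in> carrier_mat d d" by (rule adj_mat(1)[OF Tc])
    have adj00: "adj_mat T $$ (0,0) = 0"
      using del assms(3) d0 Tc by (simp add: adj_mat_def cofactor_def)
    have "adj_mat T = (Tinv * T) * adj_mat T" using TiT adjc by simp
    also have "\<dots> = Tinv * (T * adj_mat T)" using Tic Tc adjc by simp
    also have "\<dots> = Tinv * (det T \<cdot>\<^sub>m 1\<^sub>m d)" using adj_mat(2)[OF Tc] by simp
    also have "\<dots> = det T \<cdot>\<^sub>m Tinv" using mult_smult_distrib[OF Tic one_carrier_mat, of "det T"] Tic by simp
    finally have "adj_mat T $$ (0,0) = det T * Tinv $$ (0,0)" using d0 Tic by simp
    then show ?thesis using adj00 detT by simp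
  qed
  obtain m where dm: "d = Suc m" using d0 by (cases d) auto
  have R1: "V_plus d t \<bullet> (Tinv *\<^sub>v unit_vec d 0)
      = (\<Sum>k<d. (if k = 0 then 0 else t (int d - int k)) * Tinv $$ (k,0))"
    unfolding scalar_prod_def[of "V_plus d t"]
    using Tic d0 by (auto simp: V_plus_def atLeast0LessThan intro!: sum.cong)
  have R2: "unit_vec d 0 \<bullet> (Tinv *\<^sub>v V_minus d t)
      = (\<Sum>l<d. Tinv $$ (0,l) * (if l = 0 then 0 else t (int l - int d)))"
  proof -
    have Vmc: "V_minus d t \<in> carrier_vec d" by (simp add: V_minus_def)
    have TVc: "Tinv *\<^sub>v V_minus d t \<in> carrier_vec d" using Tic Vmc by simp
    have "unit_vec d 0 \<bullet> (Tinv *\<^sub>v V_minus d t) = (Tinv *\<^sub>v V_minus d t) $ 0"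
      by (rule scalar_prod_left_unit[OF TVc d0])
    also have "\<dots> = row Tinv 0 \<bullet> V_minus d t" using Tic d0 by simp
    also have "\<dots> = (\<Sum>l<d. Tinv $$ (0,l) * (if l = 0 then 0 else t (int l - int d)))"
      using Tic d0 by (auto simp: V_minus_def scalar_prod_def atLeast0LessThan intro!: sum.cong)
    finally show ?thesis .
  qed
  have R3: "V_plus d t \<bullet> (Tinv *\<^sub>v V_minus d t)
      = (\<Sum>k<d. (if k = 0 then 0 else t (int d - int k)) *
           (\<Sum>l<d. Tinv $$ (k,l) * (if l = 0 then 0 else t (int l - int d))))"
    using Tic d0 by (auto simp: V_plus_def V_minus_def scalar_prod_def atLeast0LessThan intro!: sum.cong)
  have N1: "V_plus d t \<bullet> (Tinv *\<^sub>v unit_vec d 0) \<noteq> 0"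
  proof
    assume S0: "V_plus d t \<bullet> (Tinv *\<^sub>v unit_vec d 0) = 0"
    define x where "x k = Tinv $$ (k,0)" for k
    define y where "y j = (if j < m then x (Suc j) else 0)" for j
    have x0: "x 0 = 0" using Ti00 x_def by simp
    have key: "(\<Sum>j<d. t (int i - int j) * y j) = 0" if i: "i < d" for i
    proof -
      have "(\<Sum>j<d. t (int i - int j) * y j) = (\<Sum>j<m. t (int i - int j) * x (Suc j))"
        unfolding dm sum.lessThan_Suc by (auto simp: y_def intro!: sum.cong)
      also have "\<dots> = (\<Sum>k<d. t (int (Suc i) - int k) * x k)"
        unfolding dm sum.lessThan_Suc_shift using x0 by simp
      also have "\<dots> = 0"
      proof (cases "Suc i < d")
        case True then show ?thesis using AB[of "Suc i" 0] d0 by (simp add: x_def)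
      next
        case False then have si: "Suc i = d" using i by simp
        have "(\<Sum>k<d. t (int d - int k) * x k)
            = (\<Sum>k<d. (if k = 0 then 0 else t (int d - int k)) * x k)"
          by (rule sum.cong) (auto simp: x0)
        then show ?thesis using S0 R1 si by (simp add: x_def)
      qed
      finally show ?thesis .
    qed
    have yz: "y j = 0" if "j < d" for j
      by (rule inj_rows[of d "\<lambda>i j. Tinv $$ (i,j)" "\<lambda>i j. t (int i - int j)", OF _ key that])
         (simp add: BA)
    have xz: "x k = 0" if "k < d" for k
    proof (cases k)
      case 0 then show ?thesis using x0 by simp
    next
      case (Suc j) then show ?thesis using yz[of j] that dm by (simp add: y_def)
    qed
    have "(\<Sum>k<d. t (int 0 - int k) * x k) = 1" using AB[of 0 0] d0 by (simp add: x_def)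
    moreover have "(\<Sum>k<d. t (int 0 - int k) * x k) = 0" using xz by simp
    ultimately show False by simp
  qed
  have N2: "unit_vec d 0 \<bullet> (Tinv *\<^sub>v V_minus d t) \<noteq> 0"
  proof
    assume S0: "unit_vec d 0 \<bullet> (Tinv *\<^sub>v V_minus d t) = 0"
    define z where "z k = Tinv $$ (0,k)" for k
    define y where "y j = (if j < m then z (Suc j) else 0)" for j
    have z0: "z 0 = 0" using Ti00 z_def by simp
    have key: "(\<Sum>i<d. y i * t (int i - int j)) = 0" if j: "j < d" for j
    proof -
      have "(\<Sum>i<d. y i * t (int i - int j)) = (\<Sum>i<m. z (Suc i) * t (int i - int j))"
        unfolding dm sum.lessThan_Suc by (auto simp: y_def intro!: sum.cong)
      also have "\<dots> = (\<Sum>k<d. z k * t (int k - int (Suc j)))"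
        unfolding dm sum.lessThan_Suc_shift using z0 by simp
      also have "\<dots> = 0"
      proof (cases "Suc j < d")
        case True then show ?thesis using BA[of 0 "Suc j"] d0 by (simp add: z_def)
      next
        case False then have si: "Suc j = d" using j by simp
        have "(\<Sum>k<d. z k * t (int k - int d))
            = (\<Sum>k<d. z k * (if k = 0 then 0 else t (int k - int d)))"
          by (rule sum.cong) (auto simp: z0)
        then show ?thesis using S0 R2 si by (simp add: z_def)
      qed
      finally show ?thesis .
    qed
    have yz: "y j = 0" if "j < d" for j
      by (rule inj_cols[of d "\<lambda>i j. t (int i - int j)" "\<lambda>i j. Tinv $$ (i,j)", OF _ key that])
         (simp add: AB)
    have zz: "z k = 0" if "k < d" for k
    proof (cases k)
      case 0 then show ?thesis using z0 by simp
    next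
      case (Suc j) then show ?thesis using yz[of j] that dm by (simp add: y_def)
    qed
    have "(\<Sum>k<d. z k * t (int k - int 0)) = 1" using BA[of 0 0] d0 by (simp add: z_def)
    moreover have "(\<Sum>k<d. z k * t (int k - int 0)) = 0" using zz by simp
    ultimately show False by simp
  qed
  have prodG: "\<And>A B a b n i j. A \<in> carrier_mat a n \<Longrightarrow> B \<in> carrier_mat n b \<Longrightarrow> i < a \<Longrightarrow> j < b \<Longrightarrow>
      (A * B) $$ (i,j) = (\<Sum>k<n. A $$ (i,k) * B $$ (k,j))"
    by (auto simp: scalar_prod_def atLeast0LessThan intro!: sum.cong)
  define vp where "vp k = (if k = 0 then 0 else t (int d - int k))" for k
  define vm where "vm l = (if l = 0 then 0 else t (int l - int d))" for l
  define U where "U = mat d 1 (\<lambda>(i,j). (if i = 0 then \<gamma> else 0) + vm i)"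
  define W where "W = mat 1 d (\<lambda>(i,j). (if j = 0 then \<delta> else 0) + vp j)"
  define Q where "Q = (mat 1 1 (\<lambda>_. t 0) :: complex mat)"
  have Uc: "U \<in> carrier_mat d 1" by (simp add: U_def)
  have Wc: "W \<in> carrier_mat 1 d" by (simp add: W_def)
  have Qc: "Q \<in> carrier_mat 1 1" by (simp add: Q_def)
  have dimT: "dim_row T = d" "dim_col T = d" using Tc by auto
  have dimQ: "dim_row Q = 1" "dim_col Q = 1" using Qc by auto
  have Bdef: "bordered_toeplitz d t \<gamma> \<delta> = four_block_mat T U W Q"
  proof (rule eq_matI)
    fix i j assume "i < dim_row (four_block_mat T U W Q)" "j < dim_col (four_block_mat T U W Q)"
    then have ij: "i < d + 1" "j < d + 1" using dimT dimQ by simp_all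
    then show "bordered_toeplitz d t \<gamma> \<delta> $$ (i,j) = four_block_mat T U W Q $$ (i,j)"
    proof -
      consider "i < d" "j < d" | "i < d" "j = d" | "i = d" "j < d" | "i = d" "j = d"
        using ij by linarith
      then show ?thesis
        using dimT dimQ d0 assms(1)
        by cases (auto simp: bordered_toeplitz_def U_def W_def Q_def vp_def vm_def Tij)
    qed
  qed (use dimT dimQ in \<open>auto simp: bordered_toeplitz_def\<close>)
  define C where "C = four_block_mat (1\<^sub>m d) (- (Tinv * U)) (0\<^sub>m 1 d) (1\<^sub>m 1)"
  have TUc: "- (Tinv * U) \<in> carrier_mat d 1" using Tic Uc by simp
  have Cc: "C \<in> carrier_mat (d+1) (d+1)" unfolding C_def by (rule four_block_carrier_mat[OF one_carrier_mat one_carrier_mat])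
  have Bc: "four_block_mat T U W Q \<in> carrier_mat (d+1) (d+1)" by (rule four_block_carrier_mat[OF Tc Qc])
  have detC: "det C = 1" unfolding C_def
    using det_four_block_mat_lower_left_zero[OF one_carrier_mat TUc refl one_carrier_mat] by simp
  have prod: "four_block_mat T U W Q * C = four_block_mat (T * 1\<^sub>m d + U * 0\<^sub>m 1 d)
      (T * - (Tinv * U) + U * 1\<^sub>m 1) (W * 1\<^sub>m d + Q * 0\<^sub>m 1 d) (W * - (Tinv * U) + Q * 1\<^sub>m 1)"
    unfolding C_def by (rule mult_four_block_mat[OF Tc Uc Wc Qc one_carrier_mat TUc zero_carrier_mat one_carrier_mat])
  have TTU: "T * (Tinv * U) = U"
  proof -
    have "(T * Tinv) * U = T * (Tinv * U)" using Tc Tic Uc by simp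
    then show ?thesis using TTi Uc by simp
  qed
  have UR: "T * - (Tinv * U) + U * 1\<^sub>m 1 = 0\<^sub>m d 1"
  proof -
    have "T * - (Tinv * U) = - (T * (Tinv * U))"
      by (rule uminus_mult_right_mat) (use Tc Tic Uc in auto)
    then show ?thesis using TTU Uc by simp
  qed
  have UL: "T * 1\<^sub>m d + U * 0\<^sub>m 1 d = T" using Tc Uc by simp
  define D where "D = W * - (Tinv * U) + Q * 1\<^sub>m 1"
  have Dc: "D \<in> carrier_mat 1 1" unfolding D_def using Wc Tic Uc Qc by simp
  have LLc: "W * 1\<^sub>m d + Q * 0\<^sub>m 1 d \<in> carrier_mat 1 d" using Wc Qc by simp
  have detB: "det (bordered_toeplitz d t \<gamma> \<delta>) = det T * D $$ (0,0)"
  proof -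
    have "det (bordered_toeplitz d t \<gamma> \<delta>) = det (four_block_mat T U W Q) * det C"
      using Bdef detC by simp
    also have "\<dots> = det (four_block_mat T U W Q * C)" using det_mult[OF Bc Cc] by simp
    also have "\<dots> = det T * det D" unfolding prod UL D_def[symmetric]
      by (rule det_four_block_mat_upper_right_zero[OF Tc UR LLc Dc])
    also have "det D = D $$ (0,0)" by (rule det_single[OF Dc])
    finally show ?thesis .
  qed
  define I where "I k = (\<Sum>l<d. Tinv $$ (k,l) * vm l)" for k
  have TiU: "(Tinv * U) $$ (k,0) = \<gamma> * Tinv $$ (k,0) + I k" if k: "k < d" for k
  proof -
    have "(Tinv * U) $$ (k,0) = (\<Sum>l<d. Tinv $$ (k,l) * U $$ (l,0))"
      by (rule prodG[OF Tic Uc k]) simp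
    also have "\<dots> = (\<Sum>l<d. (if l = 0 then Tinv $$ (k,l) * \<gamma> else 0) + Tinv $$ (k,l) * vm l)"
      by (rule sum.cong) (auto simp: U_def distrib_left)
    also have "\<dots> = \<gamma> * Tinv $$ (k,0) + I k"
      using d0 by (simp add: sum.distrib I_def mult.commute)
    finally show ?thesis .
  qed
  define E where "E = (W * (Tinv * U)) $$ (0,0)"
  have D00: "D $$ (0,0) = t 0 - E" unfolding D_def E_def using Wc Tic Uc Qc by (simp add: Q_def)
  have Eeq: "E = \<delta> * I 0 + \<gamma> * (\<Sum>k<d. vp k * Tinv $$ (k,0)) + (\<Sum>k<d. vp k * I k)"
  proof -
    have "E = (\<Sum>k<d. W $$ (0,k) * (Tinv * U) $$ (k,0))"
      unfolding E_def by (rule prodG[OF Wc _ _ _]) (use Tic Uc in auto)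
    also have "\<dots> = (\<Sum>k<d. (if k = 0 then \<delta> * (\<gamma> * Tinv $$ (k,0) + I k) else 0)
        + (\<gamma> * (vp k * Tinv $$ (k,0)) + vp k * I k))"
      by (rule sum.cong) (auto simp: W_def TiU distrib_left distrib_right)
    also have "\<dots> = \<delta> * (\<gamma> * Tinv $$ (0,0) + I 0) + \<gamma> * (\<Sum>k<d. vp k * Tinv $$ (k,0)) + (\<Sum>k<d. vp k * I k)"
      using d0 by (simp add: sum.distrib sum_distrib_left)
    finally show ?thesis using Ti00 by simp
  qed
  have R1': "V_plus d t \<bullet> (Tinv *\<^sub>v unit_vec d 0) = (\<Sum>k<d. vp k * Tinv $$ (k,0))"
    using R1 by (simp add: vp_def)
  have R2': "unit_vec d 0 \<bullet> (Tinv *\<^sub>v V_minus d t) = I 0"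
    using R2 by (simp add: vm_def I_def)
  have R3': "V_plus d t \<bullet> (Tinv *\<^sub>v V_minus d t) = (\<Sum>k<d. vp k * I k)"
    using R3 by (simp add: vm_def vp_def I_def)
  have "det (bordered_toeplitz d t \<gamma> \<delta>) =
           - det (toeplitz d t) *
             (\<gamma> * (V_plus d t \<bullet> (Tinv *\<^sub>v unit_vec d 0))
              + \<delta> * (unit_vec d 0 \<bullet> (Tinv *\<^sub>v V_minus d t))
              + V_plus d t \<bullet> (Tinv *\<^sub>v V_minus d t)
              - t 0)"
    unfolding detB D00 Eeq R1' R2' R3' T_def[symmetric] by (simp add: algebra_simps)
  then show ?thesis using N1 N2 by blast
qed

end
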